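(* For every mixed graph $G$ without directed cycles, $\mathrm{cw}_{\mathrm m}(G)\le\mathrm{nd}_{\mathrm m}(G)+1$. Further, $\mathrm{cw}_{\mathrm m}$ does not bound $\mathrm{nd}_{\mathrm m}$.
   Context: A mixed graph $G$ consists of a finite vertex set $V(G)$, a set $E(G)$ of undirected edges and a set $A(G)$ of directed arcs; it is simple and contains no directed cycle. $N^+(v)$, $N^-(v)$, $N^{\mathrm u}(v)$ denote out-, in- and undirected neighbors. Vertices $u,v$ have the same mixed type if $N^{\mathrm u}(u)\setminus\{v\}=N^{\mathrm u}(v)\setminus\{u\}$, $N^-(u)=N^-(v)$, $N^+(u)=N^+(v)$; $\mathrm{nd}_{\mathrm m}(G)$ is the number of mixed types. The mixed cliquewidth $\mathrm{cw}_{\mathrm m}(G)$ is the minimum number of labels needed to construct $G$ using: create a new vertex with label $i$; disjoint union; $\eta_{i,j}$ ($i\ne j$): add an edge between every vertex labeled $i$ and every vertex labeled $j$; $\alpha_{i,j}$ ($i\ne j$): add an arc from every vertex labeled $i$ to every vertex labeled $j$; $\rho_{i\to j}$: rename label $i$ to $j$. A parameter $\alpha$ bounds $\beta$ if there is a computable $f$ with $\beta(G)\le f(\alpha(G))$ for all $G$ (here: all mixed graphs without directed cycles). *)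

theory Defs
  imports Main
begin

text \<open>A mixed graph is a triple (V, E, A): vertex set V, undirected edges E given as a
symmetric relation (both (u,v) and (v,u) are present for an edge uv), and arcs A
((u,v) is an arc from u to v).\<close>

type_synonym 'a mgraph = "'a set \<times> ('a \<times> 'a) set \<times> ('a \<times> 'a) set"

definition mverts :: "'a mgraph \<Rightarrow> 'a set" where "mverts G = fst G"
definition medges :: "'a mgraph \<Rightarrow> ('a \<times> 'a) set" where "medges G = fst (snd G)"
definition marcs :: "'a mgraph \<Rightarrow> ('a \<times> 'a) set" where "marcs G = snd (snd G)"

definition mixed_graph :: "'a mgraph \<Rightarrow> bool" where
  "mixed_graph G \<longleftrightarrow>
     finite (mverts G) \<and>
     medges G \<subseteq> mverts G \<times> mverts G \<and> sym (medges G) \<and> irrefl (medges G) \<and>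
     marcs G \<subseteq> mverts G \<times> mverts G \<and> irrefl (marcs G) \<and>
     (\<forall>u v. (u, v) \<in> medges G \<longrightarrow> (u, v) \<notin> marcs G) \<and>
     (\<forall>u v. (u, v) \<in> marcs G \<longrightarrow> (v, u) \<notin> marcs G) \<and>
     acyclic (marcs G)"

definition Nout :: "'a mgraph \<Rightarrow> 'a \<Rightarrow> 'a set" where
  "Nout G v = {u. (v, u) \<in> marcs G}"
definition Nin :: "'a mgraph \<Rightarrow> 'a \<Rightarrow> 'a set" where
  "Nin G v = {u. (u, v) \<in> marcs G}"
definition Nund :: "'a mgraph \<Rightarrow> 'a \<Rightarrow> 'a set" where
  "Nund G v = {u. (v, u) \<in> medges G}"

definition same_mixed_type :: "'a mgraph \<Rightarrow> 'a \<Rightarrow> 'a \<Rightarrow> bool" where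
  "same_mixed_type G u v \<longleftrightarrow>
     Nund G u - {v} = Nund G v - {u} \<and> Nin G u = Nin G v \<and> Nout G u = Nout G v"

definition nd_m :: "'a mgraph \<Rightarrow> nat" where
  "nd_m G = card (mverts G // {(u, v). u \<in> mverts G \<and> v \<in> mverts G \<and> same_mixed_type G u v})"

inductive cw_constr :: "nat \<Rightarrow> 'a mgraph \<Rightarrow> ('a \<Rightarrow> nat) \<Rightarrow> bool" for k :: nat where
  create: "i < k \<Longrightarrow> cw_constr k ({v}, {}, {}) (\<lambda>_. i)"
| union: "cw_constr k (V1, E1, A1) l1 \<Longrightarrow> cw_constr k (V2, E2, A2) l2 \<Longrightarrow> V1 \<inter> V2 = {} \<Longrightarrow>
    cw_constr k (V1 \<union> V2, E1 \<union> E2, A1 \<union> A2) (\<lambda>x. if x \<in> V1 then l1 x else l2 x)"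
| eta: "cw_constr k (V, E, A) l \<Longrightarrow> i \<noteq> j \<Longrightarrow>
    cw_constr k (V, E \<union> {(x, y). x \<in> V \<and> y \<in> V \<and>
        ((l x = i \<and> l y = j) \<or> (l x = j \<and> l y = i))}, A) l"
| alpha: "cw_constr k (V, E, A) l \<Longrightarrow> i \<noteq> j \<Longrightarrow>
    cw_constr k (V, E, A \<union> {(x, y). x \<in> V \<and> y \<in> V \<and> l x = i \<and> l y = j}) l"
| rho: "cw_constr k (V, E, A) l \<Longrightarrow> j < k \<Longrightarrow>
    cw_constr k (V, E, A) (\<lambda>x. if l x = i then j else l x)"

definition cw_m :: "'a mgraph \<Rightarrow> nat" where
  "cw_m G = (LEAST k. \<exists>l. cw_constr k G l)"

end

theory Submission
  imports Defs
begin

lemma eta_many: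
  assumes "finite P" "cw_constr k (V,E,A) l" "\<forall>p\<in>P. fst p \<noteq> snd p"
  shows "cw_constr k (V, E \<union> {(x,y). x\<in>V \<and> y\<in>V \<and> ((l x, l y) \<in> P \<or> (l y, l x) \<in> P)}, A) l"
  using assms
proof (induction P rule: finite_induct)
  case empty then show ?case by simp
next
  case (insert p P)
  obtain i j where p: "p = (i,j)" by (cases p)
  have ij: "i \<noteq> j" using insert.prems p by auto
  have "cw_constr k (V, E \<union> {(x,y). x\<in>V \<and> y\<in>V \<and> ((l x, l y) \<in> P \<or> (l y, l x) \<in> P)}, A) l"
    using insert by auto
  from cw_constr.eta[OF this ij]
  have "cw_constr k (V, E \<union> {(x,y). x\<in>V \<and> y\<in>V \<and> ((l x, l y) \<in> P \<or> (l y, l x) \<in> P)} \<union> {(x, y). x \<in> V \<and> y \<in> V \<and>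
        ((l x = i \<and> l y = j) \<or> (l x = j \<and> l y = i))}, A) l" .
  moreover have "E \<union> {(x,y). x\<in>V \<and> y\<in>V \<and> ((l x, l y) \<in> P \<or> (l y, l x) \<in> P)} \<union> {(x, y). x \<in> V \<and> y \<in> V \<and>
        ((l x = i \<and> l y = j) \<or> (l x = j \<and> l y = i))} = E \<union> {(x,y). x\<in>V \<and> y\<in>V \<and> ((l x, l y) \<in> insert p P \<or> (l y, l x) \<in> insert p P)}"
    using p by auto
  ultimately show ?case by simp
qed

lemma alpha_many:
  assumes "finite Q" "cw_constr k (V,E,A) l" "\<forall>p\<in>Q. fst p \<noteq> snd p"
  shows "cw_constr k (V, E, A \<union> {(x,y). x\<in>V \<and> y\<in>V \<and> (l x, l y) \<in> Q}) l"
  using assms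
proof (induction Q rule: finite_induct)
  case empty then show ?case by simp
next
  case (insert p Q)
  obtain i j where p: "p = (i,j)" by (cases p)
  have ij: "i \<noteq> j" using insert.prems p by auto
  have "cw_constr k (V, E, A \<union> {(x,y). x\<in>V \<and> y\<in>V \<and> (l x, l y) \<in> Q}) l"
    using insert by auto
  from cw_constr.alpha[OF this ij]
  have "cw_constr k (V, E, A \<union> {(x,y). x\<in>V \<and> y\<in>V \<and> (l x, l y) \<in> Q} \<union> {(x, y). x \<in> V \<and> y \<in> V \<and> l x = i \<and> l y = j}) l" .
  moreover have "A \<union> {(x,y). x\<in>V \<and> y\<in>V \<and> (l x, l y) \<in> Q} \<union> {(x, y). x \<in> V \<and> y \<in> V \<and> l x = i \<and> l y = j}
     = A \<union> {(x,y). x\<in>V \<and> y\<in>V \<and> (l x, l y) \<in> insert p Q}"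
    using p by auto
  ultimately show ?case by simp
qed

lemma part1:
  fixes G :: "'a mgraph"
  assumes mg: "mixed_graph G" and ne: "mverts G \<noteq> {}"
  shows "cw_m G \<le> nd_m G + 1"
proof -
  obtain V E A where G: "G = (V,E,A)" by (cases G)
  have V: "mverts G = V" and Ed: "medges G = E" and Ar: "marcs G = A"
    by (simp_all add: G mverts_def medges_def marcs_def)
  define R where "R = {(u, v). u \<in> V \<and> v \<in> V \<and> same_mixed_type G u v}"
  define t where "t = nd_m G"
  have t: "t = card (V // R)" by (simp add: t_def nd_m_def R_def V)
  have finV: "finite V" using mg by (simp add: mixed_graph_def V)
  have EV: "E \<subseteq> V \<times> V" and symE: "sym E" and irE: "irrefl E" and AV: "A \<subseteq> V \<times> V"
    and irA: "irrefl A"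
    using mg by (simp_all add: mixed_graph_def V Ed Ar)
  have finQ: "finite (V // R)" using finV by (rule finite_quotient) (auto simp: R_def)
  obtain h where h: "bij_betw h (V // R) {0..<t}" using ex_bij_betw_finite_nat[OF finQ] t by auto
  define cls where "cls x = h (R `` {x})" for x
  have cls_lt: "cls x < t" if "x \<in> V" for x
  proof -
    have "R `` {x} \<in> V // R" using that by (rule quotientI)
    then show ?thesis using bij_betw_apply[OF h] by (auto simp: cls_def)
  qed
  have cls_eq: "same_mixed_type G x y" if "x\<in>V" "y\<in>V" "cls x = cls y" for x y
  proof -
    have "R `` {x} \<in> V // R" "R `` {y} \<in> V // R" using that by (auto intro: quotientI)
    then have "R `` {x} = R `` {y}" using bij_betw_imp_inj_on[OF h] that(3)
      by (auto simp: cls_def inj_on_def)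
    moreover have "y \<in> R `` {y}" using that by (auto simp: R_def same_mixed_type_def)
    ultimately show ?thesis by (auto simp: R_def)
  qed
  have edge_tr: "(v,y) \<in> E" if "y\<in>V" "u\<in>V" "cls u = cls y" "u \<noteq> v" "(v,u)\<in>E" "v \<noteq> y" for u v y
  proof (cases "u = y")
    case True then show ?thesis using that by simp
  next
    case False
    have "Nund G u - {y} = Nund G y - {u}" using cls_eq[OF that(2,1,3)] by (simp add: same_mixed_type_def)
    moreover have "v \<in> Nund G u - {y}" using that symE by (auto simp: Nund_def Ed dest: symD)
    ultimately have "v \<in> Nund G y" by blast
    then show ?thesis using symE by (auto simp: Nund_def Ed dest: symD)
  qed
  have arc_out: "(v,y) \<in> A" if "y\<in>V" "u\<in>V" "cls u = cls y" "(v,u)\<in>A" for u v y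
    using cls_eq[OF that(2,1,3)] that(4) by (auto simp: same_mixed_type_def Nin_def Ar)
  have arc_in: "(y,v) \<in> A" if "y\<in>V" "u\<in>V" "cls u = cls y" "(u,v)\<in>A" for u v y
    using cls_eq[OF that(2,1,3)] that(4) by (auto simp: same_mixed_type_def Nout_def Ar)
  have key: "S \<subseteq> V \<Longrightarrow> \<exists>l. cw_constr (t+1) (S, E \<inter> S \<times> S, A \<inter> S \<times> S) l \<and> (\<forall>x\<in>S. l x = cls x)"
    if "finite S" "S \<noteq> {}" for S
    using that
  proof (induction S rule: finite_ne_induct)
    case (singleton v)
    have "cw_constr (t+1) ({v}, {}, {}) (\<lambda>_. cls v)" by (rule create) (use cls_lt[of v] singleton in auto)
    moreover have "E \<inter> {v} \<times> {v} = {}" "A \<inter> {v} \<times> {v} = {}" using irE irA by (auto simp: irrefl_def)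
    ultimately show ?case by auto
  next
    case (insert v S)
    obtain l where l: "cw_constr (t+1) (S, E \<inter> S \<times> S, A \<inter> S \<times> S) l" "\<forall>x\<in>S. l x = cls x"
      using insert by auto
    have vV: "v \<in> V" and SV: "S \<subseteq> V" using insert by auto
    have c1: "cw_constr (t+1) ({v},{},{}) (\<lambda>_. t)" by (rule create) simp
    define L where "L = (\<lambda>x. if x\<in>S then l x else t)"
    have u: "cw_constr (t+1) (S \<union> {v}, E \<inter> S \<times> S \<union> {}, A \<inter> S \<times> S \<union> {}) L"
      unfolding L_def by (rule union[OF l(1) c1]) (use insert in auto)
    define P where "P = {(t, i) | i. i < t \<and> (\<exists>u\<in>V. cls u = i \<and> u \<noteq> v \<and> (v,u) \<in> E)}"
    define Q where "Q = {(t, i) | i. i < t \<and> (\<exists>u\<in>V. cls u = i \<and> (v,u) \<in> A)} \<union>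
       {(i, t) | i. i < t \<and> (\<exists>u\<in>V. cls u = i \<and> (u,v) \<in> A)}"
    have finP: "finite P" by (rule finite_subset[of _ "{t} \<times> {0..<t}"]) (auto simp: P_def)
    have finQ: "finite Q" by (rule finite_subset[of _ "{t} \<times> {0..<t} \<union> {0..<t} \<times> {t}"]) (auto simp: Q_def)
    have e: "cw_constr (t+1) (S \<union> {v}, E \<inter> S \<times> S \<union> {} \<union> {(x,y). x\<in>S \<union> {v} \<and> y\<in>S \<union> {v} \<and> ((L x, L y) \<in> P \<or> (L y, L x) \<in> P)}, A \<inter> S \<times> S \<union> {}) L"
      by (rule eta_many[OF finP u]) (auto simp: P_def)
    have a: "cw_constr (t+1) (S \<union> {v}, E \<inter> S \<times> S \<union> {} \<union> {(x,y). x\<in>S \<union> {v} \<and> y\<in>S \<union> {v} \<and> ((L x, L y) \<in> P \<or> (L y, L x) \<in> P)}, 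
        A \<inter> S \<times> S \<union> {} \<union> {(x,y). x\<in>S \<union> {v} \<and> y\<in>S \<union> {v} \<and> (L x, L y) \<in> Q}) L"
      by (rule alpha_many[OF finQ e]) (auto simp: Q_def)
    have r: "cw_constr (t+1) (S \<union> {v}, E \<inter> S \<times> S \<union> {} \<union> {(x,y). x\<in>S \<union> {v} \<and> y\<in>S \<union> {v} \<and> ((L x, L y) \<in> P \<or> (L y, L x) \<in> P)}, 
        A \<inter> S \<times> S \<union> {} \<union> {(x,y). x\<in>S \<union> {v} \<and> y\<in>S \<union> {v} \<and> (L x, L y) \<in> Q}) (\<lambda>x. if L x = t then cls v else L x)"
      by (rule rho[OF a]) (use cls_lt[of v] vV in auto)
    have LS: "x \<in> S \<Longrightarrow> L x = cls x" for x using l(2) by (simp add: L_def)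
    have Lv: "L v = t" using insert by (simp add: L_def)
    have ltS: "x \<in> S \<Longrightarrow> cls x < t" for x using cls_lt SV by auto
    have vS: "v \<notin> S" using insert.hyps by simp
    have Lt: "x \<in> insert v S \<Longrightarrow> L x = t \<longleftrightarrow> x = v" for x using LS Lv ltS by force
    have Llt: "x \<in> insert v S \<Longrightarrow> L x < t \<longleftrightarrow> x \<in> S" for x using LS Lv ltS by force
    have memP: "(L x, L y) \<in> P \<longleftrightarrow> x = v \<and> y \<in> S \<and> (v,y) \<in> E"
      if "x \<in> insert v S" "y \<in> insert v S" for x y
    proof
      assume "(L x, L y) \<in> P"
      then obtain u where "L x = t" "L y < t" "u\<in>V" "cls u = L y" "u \<noteq> v" "(v,u) \<in> E"
        unfolding P_def by auto
      moreover have "x = v" "y \<in> S" using Lt[OF that(1)] Llt[OF that(2)] calculation by auto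
      moreover have "y \<in> V" "v \<noteq> y" using SV vS calculation by auto
      ultimately show "x = v \<and> y \<in> S \<and> (v,y) \<in> E" using edge_tr LS by metis
    next
      assume "x = v \<and> y \<in> S \<and> (v,y) \<in> E"
      then show "(L x, L y) \<in> P" unfolding P_def using Lv LS ltS SV vS by auto
    qed
    have memQ: "(L x, L y) \<in> Q \<longleftrightarrow> (x = v \<and> y \<in> S \<and> (v,y) \<in> A) \<or> (y = v \<and> x \<in> S \<and> (x,v) \<in> A)"
      if "x \<in> insert v S" "y \<in> insert v S" for x y
    proof
      assume "(L x, L y) \<in> Q"
      then consider (o) u where "L x = t" "L y < t" "u\<in>V" "cls u = L y" "(v,u) \<in> A"
        | (i) u where "L y = t" "L x < t" "u\<in>V" "cls u = L x" "(u,v) \<in> A"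
        unfolding Q_def by auto
      then show "(x = v \<and> y \<in> S \<and> (v,y) \<in> A) \<or> (y = v \<and> x \<in> S \<and> (x,v) \<in> A)"
      proof cases
        case o
        moreover have "x = v" "y \<in> S" using Lt[OF that(1)] Llt[OF that(2)] o by auto
        moreover have "y \<in> V" using SV calculation by auto
        ultimately show ?thesis using arc_out LS by metis
      next
        case i
        moreover have "y = v" "x \<in> S" using Lt[OF that(2)] Llt[OF that(1)] i by auto
        moreover have "x \<in> V" using SV calculation by auto
        ultimately show ?thesis using arc_in LS by metis
      qed
    next
      assume "(x = v \<and> y \<in> S \<and> (v,y) \<in> A) \<or> (y = v \<and> x \<in> S \<and> (x,v) \<in> A)"
      then show "(L x, L y) \<in> Q" unfolding Q_def using Lv LS ltS SV vS by auto
    qed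
    have eqE: "E \<inter> S \<times> S \<union> {} \<union> {(x,y). x\<in>S \<union> {v} \<and> y\<in>S \<union> {v} \<and> ((L x, L y) \<in> P \<or> (L y, L x) \<in> P)}
       = E \<inter> insert v S \<times> insert v S"
    proof (intro set_eqI iffI)
      fix p assume "p \<in> E \<inter> S \<times> S \<union> {} \<union> {(x,y). x\<in>S \<union> {v} \<and> y\<in>S \<union> {v} \<and> ((L x, L y) \<in> P \<or> (L y, L x) \<in> P)}"
      then show "p \<in> E \<inter> insert v S \<times> insert v S"
      proof (cases p)
        case (Pair x y)
        show ?thesis using \<open>p \<in> _\<close> memP[of x y] memP[of y x] symE unfolding Pair
          by (auto dest: symD)
      qed
    next
      fix p assume "p \<in> E \<inter> insert v S \<times> insert v S"
      then show "p \<in> E \<inter> S \<times> S \<union> {} \<union> {(x,y). x\<in>S \<union> {v} \<and> y\<in>S \<union> {v} \<and> ((L x, L y) \<in> P \<or> (L y, L x) \<in> P)}"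
      proof (cases p)
        case (Pair x y)
        show ?thesis using \<open>p \<in> _\<close> memP[of x y] memP[of y x] symE irE unfolding Pair
          by (auto dest: symD simp: irrefl_def)
      qed
    qed
    have eqA: "A \<inter> S \<times> S \<union> {} \<union> {(x,y). x\<in>S \<union> {v} \<and> y\<in>S \<union> {v} \<and> (L x, L y) \<in> Q}
       = A \<inter> insert v S \<times> insert v S"
    proof (intro set_eqI iffI)
      fix p assume "p \<in> A \<inter> S \<times> S \<union> {} \<union> {(x,y). x\<in>S \<union> {v} \<and> y\<in>S \<union> {v} \<and> (L x, L y) \<in> Q}"
      then show "p \<in> A \<inter> insert v S \<times> insert v S"
      proof (cases p)
        case (Pair x y)
        show ?thesis using \<open>p \<in> _\<close> memQ[of x y] unfolding Pair by auto
      qed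
    next
      fix p assume "p \<in> A \<inter> insert v S \<times> insert v S"
      then show "p \<in> A \<inter> S \<times> S \<union> {} \<union> {(x,y). x\<in>S \<union> {v} \<and> y\<in>S \<union> {v} \<and> (L x, L y) \<in> Q}"
      proof (cases p)
        case (Pair x y)
        show ?thesis using \<open>p \<in> _\<close> memQ[of x y] irA unfolding Pair by (auto simp: irrefl_def)
      qed
    qed
    have lab: "\<forall>x\<in>insert v S. (if L x = t then cls v else L x) = cls x"
      using LS Lt by auto
    have ins: "S \<union> {v} = insert v S" by auto
    have r2: "cw_constr (t+1) (insert v S, E \<inter> insert v S \<times> insert v S, A \<inter> insert v S \<times> insert v S) (\<lambda>x. if L x = t then cls v else L x)"
      using r unfolding eqE eqA unfolding ins .
    show ?case using r2 lab by blast
  qed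
  obtain l where "cw_constr (t+1) (V, E \<inter> V \<times> V, A \<inter> V \<times> V) l"
    using key[OF finV] ne V by blast
  moreover have "E \<inter> V \<times> V = E" "A \<inter> V \<times> V = A" using EV AV by auto
  ultimately have "cw_constr (t+1) G l" by (simp add: G)
  then show ?thesis unfolding cw_m_def t_def[symmetric] by (auto intro: Least_le)
qed

definition tour :: "nat \<Rightarrow> nat mgraph" where
  "tour n = ({0..<n}, {}, {(i,j). i < j \<and> j < n})"

lemma tour_cw: "n \<ge> 1 \<Longrightarrow> \<exists>l. cw_constr 2 (tour n) l \<and> (\<forall>x<n. l x = 0)"
proof (induction n)
  case 0 then show ?case by simp
next
  case (Suc n)
  show ?case
  proof (cases "n = 0")
    case True
    have "cw_constr 2 ({0}, {}, {}) (\<lambda>_. 0)" by (rule create) simp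
    moreover have "tour (Suc n) = ({0}, {}, {})" using True by (auto simp: tour_def)
    ultimately show ?thesis by auto
  next
    case False
    then obtain l where l: "cw_constr 2 ({0..<n}, {}, {(i,j). i < j \<and> j < n}) l" "\<forall>x<n. l x = 0"
      using Suc by (auto simp: tour_def)
    have c1: "cw_constr 2 ({n},{},{}) (\<lambda>_. 1)" by (rule create) simp
    define L where "L = (\<lambda>x. if x \<in> {0..<n} then l x else (1::nat))"
    have u: "cw_constr 2 ({0..<n} \<union> {n}, {} \<union> {}, {(i,j). i < j \<and> j < n} \<union> {}) L"
      unfolding L_def by (rule union[OF l(1) c1]) auto
    have a: "cw_constr 2 ({0..<n} \<union> {n}, {} \<union> {}, {(i,j). i < j \<and> j < n} \<union> {} \<union>
       {(x,y). x \<in> {0..<n} \<union> {n} \<and> y \<in> {0..<n} \<union> {n} \<and> L x = 0 \<and> L y = 1}) L"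
      by (rule alpha[OF u]) simp
    have r: "cw_constr 2 ({0..<n} \<union> {n}, {} \<union> {}, {(i,j). i < j \<and> j < n} \<union> {} \<union>
       {(x,y). x \<in> {0..<n} \<union> {n} \<and> y \<in> {0..<n} \<union> {n} \<and> L x = 0 \<and> L y = 1}) (\<lambda>x. if L x = 1 then 0 else L x)"
      by (rule rho[OF a]) simp
    have e1: "{0..<n} \<union> {n} = {0..<Suc n}" by auto
    have e2: "{(i,j). i < j \<and> j < n} \<union> {} \<union>
       {(x,y). x \<in> {0..<n} \<union> {n} \<and> y \<in> {0..<n} \<union> {n} \<and> L x = 0 \<and> L y = 1} = {(i,j). i < j \<and> j < Suc n}"
      using l(2) by (auto simp: L_def less_Suc_eq)
    have "cw_constr 2 (tour (Suc n)) (\<lambda>x. if L x = 1 then 0 else L x)"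
      using r unfolding e2 unfolding e1 tour_def by simp
    moreover have "\<forall>x<Suc n. (\<lambda>x. if L x = 1 then 0 else L x) x = 0"
      using l(2) by (auto simp: L_def less_Suc_eq)
    ultimately show ?thesis by blast
  qed
qed

lemma tour_cw_m: "n \<ge> 1 \<Longrightarrow> cw_m (tour n) \<le> 2"
proof -
  assume "n \<ge> 1"
  then obtain l where "cw_constr 2 (tour n) l" using tour_cw by blast
  then show ?thesis unfolding cw_m_def by (auto intro: Least_le)
qed

lemma tour_mg: "mixed_graph (tour n)"
proof -
  have "acyclic {(i,j). i < j \<and> j < n}"
    by (rule acyclic_subset[OF wf_acyclic[OF wf_less_than]]) (auto simp: less_than_iff)
  then show ?thesis
    by (auto simp: mixed_graph_def tour_def mverts_def medges_def marcs_def irrefl_def sym_def)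
qed

lemma tour_nd: "nd_m (tour n) = n"
proof -
  have R: "{(u, v). u \<in> mverts (tour n) \<and> v \<in> mverts (tour n) \<and> same_mixed_type (tour n) u v} = Id_on {0..<n}"
  proof (intro set_eqI iffI)
    fix p assume "p \<in> {(u, v). u \<in> mverts (tour n) \<and> v \<in> mverts (tour n) \<and> same_mixed_type (tour n) u v}"
    then obtain u v where p: "p = (u,v)" "u < n" "v < n" "Nin (tour n) u = Nin (tour n) v"
      by (auto simp: same_mixed_type_def mverts_def tour_def)
    have "Nin (tour n) u = {m. m < u}" "Nin (tour n) v = {m. m < v}"
      using p by (auto simp: Nin_def marcs_def tour_def)
    then have "u = v" using p(4) by (metis linorder_neqE_nat mem_Collect_eq less_irrefl)
    then show "p \<in> Id_on {0..<n}" using p by auto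
  next
    fix p assume "p \<in> Id_on {0..<n}"
    then show "p \<in> {(u, v). u \<in> mverts (tour n) \<and> v \<in> mverts (tour n) \<and> same_mixed_type (tour n) u v}"
      by (auto simp: same_mixed_type_def mverts_def tour_def)
  qed
  have Q: "{0..<n} // Id_on {0..<n} = (\<lambda>x. {x}) ` {0..<n}"
    by (auto simp: quotient_def)
  have "card ((\<lambda>x::nat. {x}) ` {0..<n}) = n"
    by (subst card_image) (auto simp: inj_on_def)
  moreover have "nd_m (tour n) = card ({0..<n} // Id_on {0..<n})"
    unfolding nd_m_def R by (simp add: mverts_def tour_def)
  ultimately show ?thesis using Q by simp
qed

theorem mainTheorem17:
  shows "(\<forall>G :: 'a mgraph. mixed_graph G \<and> mverts G \<noteq> {} \<longrightarrow> cw_m G \<le> nd_m G + 1) \<and>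
         \<not> (\<exists>f :: nat \<Rightarrow> nat. \<forall>G :: nat mgraph. mixed_graph G \<and> mverts G \<noteq> {} \<longrightarrow>
               nd_m G \<le> f (cw_m G))"
proof
  show "\<forall>G :: 'a mgraph. mixed_graph G \<and> mverts G \<noteq> {} \<longrightarrow> cw_m G \<le> nd_m G + 1"
    using part1 by blast
next
  show "\<not> (\<exists>f :: nat \<Rightarrow> nat. \<forall>G :: nat mgraph. mixed_graph G \<and> mverts G \<noteq> {} \<longrightarrow>
               nd_m G \<le> f (cw_m G))"
  proof
    assume "\<exists>f :: nat \<Rightarrow> nat. \<forall>G :: nat mgraph. mixed_graph G \<and> mverts G \<noteq> {} \<longrightarrow> nd_m G \<le> f (cw_m G)"
    then obtain f :: "nat \<Rightarrow> nat" where f: "\<And>G :: nat mgraph. mixed_graph G \<Longrightarrow> mverts G \<noteq> {} \<Longrightarrow> nd_m G \<le> f (cw_m G)"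
      by blast
    define n where "n = f 0 + f 1 + f 2 + 1"
    have n1: "n \<ge> 1" by (simp add: n_def)
    have ne: "mverts (tour n) \<noteq> {}" using n1 by (auto simp: mverts_def tour_def)
    have "n \<le> f (cw_m (tour n))" using f[OF tour_mg ne] by (simp add: tour_nd)
    moreover have "cw_m (tour n) \<le> 2" using tour_cw_m[OF n1] .
    then have "f (cw_m (tour n)) \<le> f 0 + f 1 + f 2"
    proof -
      have "cw_m (tour n) = 0 \<or> cw_m (tour n) = 1 \<or> cw_m (tour n) = 2"
        using \<open>cw_m (tour n) \<le> 2\<close> by auto
      then show ?thesis by auto
    qed
    ultimately show False by (simp add: n_def)
  qed
qed

end
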